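(* Let $n\ge1$, $\mathbf{k}=(k_1,\dots,k_n)$ positive integers, $N=n+|\mathbf{k}|$, and $D\in\mathcal{D}_{\mathbf{k}}$. Then the sequence $\sigma(D)$ of indices written by the Walking Algorithm on $(T(D),R(D))$ has length $N$.
   Context: $|\mathbf{k}|=k_1+\cdots+k_n$. $\mathcal{D}_{\mathbf{k}}$: sequences $(a_1,\dots,a_N)$ whose positive entries are $k_1,\dots,k_n$ in order, other entries $-1$, all partial sums $a_1+\cdots+a_{i-1}\ge0$. SW-word: $S^{k_j}$ for up step $k_j$, $W$ for $-1$. Filling Algorithm producing $T(D)$: $n$ columns, column $i$ with $k_i+1$ cells in rows $1,\dots,k_i+1$; place $1$ at top of column 1; having placed $1,\dots,i-1$, the lowest filled entry of column $j$ is active if not in row $k_j+1$; if the $i$-th letter is $W$ place $i$ below the smallest active entry, otherwise at the top of the leftmost empty column; continue until $1,\dots,N$ placed. Entries of $T(D)$ are indices. Ranking Algorithm producing $R(D)$: ranks $0,\dots,k_1$ to column-1 indices top to bottom; for $i=2,\dots,n$, if the top index of column $i$ is $A+1$ and index $A$ has rank $a$, column $i$ gets ranks $a,\dots,a+k_i$ top to bottom. Among boxes of equal rank, the largest is the one with largest index. Walking Algorithm: go to the largest rank-$0$ box, mark it, write its index. Repeat: if the current box is in row 1 of column $i$, let $r$ be the rank of the bottom box (row $k_i+1$) of column $i$; otherwise let $r$ be the rank of the box directly above. If an unmarked box of rank $r$ exists, go to the unmarked rank-$r$ box with largest index, mark it and write its index; otherwise stop. $\sigma(D)$ is the sequence of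 written indices. *)

theory Defs
  imports Main
begin

text \<open>Compositions k = (k_1,...,k_n) are lists ks; N = n + |k|.
  Columns and indices into ks are 0-based internally; rows are 1-based.\<close>

definition bigN :: "nat list \<Rightarrow> nat" where
  "bigN ks = length ks + sum_list ks"

definition in_Dk :: "nat list \<Rightarrow> int list \<Rightarrow> bool" where
  "in_Dk ks D \<longleftrightarrow>
     length D = bigN ks \<and>
     filter (\<lambda>a. a > 0) D = map int ks \<and>
     (\<forall>a\<in>set D. a > 0 \<or> a = -1) \<and>
     (\<forall>i<length D. sum_list (take i D) \<ge> 0)"

text \<open>Filling algorithm. A tableau is a list of columns, each column the list of
  its entries (indices) from top (row 1) downwards.\<close>

definition active :: "nat list \<Rightarrow> nat list list \<Rightarrow> nat \<Rightarrow> bool" where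
  "active ks cols j \<longleftrightarrow> j < length ks \<and> cols ! j \<noteq> [] \<and> length (cols ! j) \<noteq> ks ! j + 1"

definition fill_step :: "nat list \<Rightarrow> nat list list \<Rightarrow> nat \<times> int \<Rightarrow> nat list list" where
  "fill_step ks cols ia = (case ia of (i, a) \<Rightarrow>
     if a = -1 then
       (let m = Min {last (cols ! j) | j. active ks cols j};
            c = (LEAST j. active ks cols j \<and> last (cols ! j) = m)
        in cols[c := cols ! c @ [i]])
     else
       (let c = (LEAST j. j < length ks \<and> cols ! j = [])
        in cols[c := [i]]))"

definition fillT :: "nat list \<Rightarrow> int list \<Rightarrow> nat list list" where
  "fillT ks D = foldl (fill_step ks) ([1] # replicate (length ks - 1) [])
                      (zip [2..<bigN ks + 1] (tl D))"

definition boxes :: "nat list list \<Rightarrow> nat set" where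
  "boxes T = (\<Union>c\<in>set T. set c)"

definition col_of :: "nat list list \<Rightarrow> nat \<Rightarrow> nat" where
  "col_of T x = (THE j. j < length T \<and> x \<in> set (T ! j))"

definition row_of :: "nat list list \<Rightarrow> nat \<Rightarrow> nat" where
  "row_of T x = (THE r. r < length (T ! col_of T x) \<and> T ! col_of T x ! r = x) + 1"

text \<open>Ranking algorithm: base_list T j lists the ranks of the top boxes of columns 0..j-1.\<close>
fun base_list :: "nat list list \<Rightarrow> nat \<Rightarrow> nat list" where
  "base_list T 0 = []"
| "base_list T (Suc j) =
     (let bs = base_list T j in
      bs @ [if j = 0 then 0
            else (let A = hd (T ! j) - 1; c = col_of T A in bs ! c + (row_of T A - 1))])"

definition rank :: "nat list list \<Rightarrow> nat \<Rightarrow> nat" where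
  "rank T x = base_list T (length T) ! col_of T x + (row_of T x - 1)"

definition target_rank :: "nat list \<Rightarrow> nat list list \<Rightarrow> nat \<Rightarrow> nat" where
  "target_rank ks T x =
     (let c = col_of T x; r = row_of T x in
      if r = 1 then rank T (T ! c ! (ks ! c))
      else rank T (T ! c ! (r - 2)))"

fun walk :: "nat list \<Rightarrow> nat list list \<Rightarrow> nat \<Rightarrow> nat \<Rightarrow> nat set \<Rightarrow> nat list" where
  "walk ks T 0 cur M = []"
| "walk ks T (Suc f) cur M =
     (let C = {x \<in> boxes T. x \<notin> M \<and> rank T x = target_rank ks T cur} in
      if C = {} then [] else Max C # walk ks T f (Max C) (insert (Max C) M))"

definition sigma :: "nat list \<Rightarrow> int list \<Rightarrow> nat list" where
  "sigma ks D =
     (let T = fillT ks D; s = Max {x \<in> boxes T. rank T x = 0} in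
      s # walk ks T (bigN ks) s {s})"

end

theory Submission
  imports Defs
begin


definition FI :: "nat list \<Rightarrow> int list \<Rightarrow> nat \<Rightarrow> nat list list \<Rightarrow> bool" where
  "FI ks D i cols \<longleftrightarrow> (let p = length (filter (\<lambda>a. 0 < a) (take (i - 1) D)); n = length ks in
     length cols = n \<and>
     (\<forall>j<n. (cols ! j = []) = (p \<le> j)) \<and>
     (\<forall>j<n. length (cols ! j) \<le> ks ! j + 1) \<and>
     (\<forall>j<n. sorted_wrt (<) (cols ! j)) \<and>
     (\<forall>j1 j2. j1 < j2 \<longrightarrow> j2 < p \<longrightarrow> hd (cols ! j1) < hd (cols ! j2)) \<and>
     (\<forall>j1<n. \<forall>j2<n. j1 \<noteq> j2 \<longrightarrow> set (cols ! j1) \<inter> set (cols ! j2) = {}) \<and>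
     (\<forall>x. (\<exists>j<n. x \<in> set (cols ! j)) \<longleftrightarrow> 1 \<le> x \<and> x < i) \<and>
     cols ! 0 \<noteq> [] \<and> hd (cols ! 0) = 1 \<and>
     int (\<Sum>j<p. (ks ! j + 1 - length (cols ! j))) = sum_list (take (i - 1) D))"

lemma sum_pm: "(\<forall>a\<in>set xs. 0 < a \<or> a = (-1::int)) \<Longrightarrow>
   sum_list xs + int (length (filter (\<lambda>a. \<not> 0 < a) xs)) = sum_list (filter (\<lambda>a. 0 < a) xs)"
  by (induction xs) auto

lemma Dk_facts:
  assumes "in_Dk ks D"
  shows "length D = bigN ks" "filter (\<lambda>a. 0 < a) D = map int ks"
    "\<forall>a\<in>set D. 0 < a \<or> a = -1" "\<And>i. i < length D \<Longrightarrow> sum_list (take i D) \<ge> 0"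
    "sum_list D = 0"
proof -
  show l: "length D = bigN ks" and f: "filter (\<lambda>a. 0 < a) D = map int ks"
    and m: "\<forall>a\<in>set D. 0 < a \<or> a = -1" and "\<And>i. i < length D \<Longrightarrow> sum_list (take i D) \<ge> 0"
    using assms by (auto simp: in_Dk_def)
  have "length (filter (\<lambda>a. 0 < a) D) + length (filter (\<lambda>a. \<not> 0 < a) D) = length D"
    by (rule sum_length_filter_compl)
  then have "length (filter (\<lambda>a. \<not> 0 < a) D) = sum_list ks" using f l by (simp add: bigN_def)
  moreover have "sum_list (map int ks) = int (sum_list ks)" by (induction ks) auto
  ultimately show "sum_list D = 0" using sum_pm[OF m] f by simp
qed

lemma step_up_val:
  assumes f: "filter (\<lambda>a. 0 < a) D = map int ks" and i: "i < length D" and pos: "0 < D ! i"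
  shows "D ! i = int (ks ! length (filter (\<lambda>a. 0 < a) (take i D)))"
    "length (filter (\<lambda>a. 0 < a) (take i D)) < length ks"
proof -
  define p where "p = length (filter (\<lambda>a. 0 < a) (take i D))"
  have t: "take (Suc i) D = take i D @ [D ! i]" using i by (simp add: take_Suc_conv_app_nth)
  have "filter (\<lambda>a. 0 < a) (take (Suc i) D) @ filter (\<lambda>a. 0 < a) (drop (Suc i) D) = map int ks"
    using f filter_append[of _ "take (Suc i) D" "drop (Suc i) D", symmetric] by simp
  then have e: "filter (\<lambda>a. 0 < a) (take i D) @ [D ! i] @ filter (\<lambda>a. 0 < a) (drop (Suc i) D) = map int ks"
    using t pos by simp
  have "length (filter (\<lambda>a. 0 < a) (take i D) @ [D ! i] @ filter (\<lambda>a. 0 < a) (drop (Suc i) D)) = length (map int ks)"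
    using e by (rule arg_cong)
  then have "length (map int ks) \<ge> p + 1" unfolding p_def by (simp only: length_append length_map) simp
  then show "p < length ks" unfolding p_def by simp
  from e have "(map int ks) ! p = D ! i" unfolding p_def by (metis nth_append_length append_Cons)
  then show "D ! i = int (ks ! p)" using \<open>p < length ks\<close> by simp
qed


lemma FI_step:
  assumes FI: "FI ks D i cols" and dk: "in_Dk ks D" and i2: "2 \<le> i" and iN: "i \<le> bigN ks" and npos: "0 < length ks"
  shows "FI ks D (Suc i) (fill_step ks cols (i, D ! (i - 1)))"
proof -
  define n where "n = length ks"
  define p where "p = length (filter (\<lambda>a. 0 < a) (take (i - 1) D))"
  note DF = Dk_facts[OF dk]
  have A: "length cols = n \<and>
     (\<forall>j<n. (cols ! j = []) = (p \<le> j)) \<and>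
     (\<forall>j<n. length (cols ! j) \<le> ks ! j + 1) \<and>
     (\<forall>j<n. sorted_wrt (<) (cols ! j)) \<and>
     (\<forall>j1 j2. j1 < j2 \<longrightarrow> j2 < p \<longrightarrow> hd (cols ! j1) < hd (cols ! j2)) \<and>
     (\<forall>j1<n. \<forall>j2<n. j1 \<noteq> j2 \<longrightarrow> set (cols ! j1) \<inter> set (cols ! j2) = {}) \<and>
     (\<forall>x. (\<exists>j<n. x \<in> set (cols ! j)) \<longleftrightarrow> 1 \<le> x \<and> x < i) \<and>
     cols ! 0 \<noteq> [] \<and> hd (cols ! 0) = 1 \<and>
     int (\<Sum>j<p. (ks ! j + 1 - length (cols ! j))) = sum_list (take (i - 1) D)"
    using FI unfolding FI_def Let_def n_def p_def .
  have lc: "length cols = n"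
    and emp: "\<And>j. j < n \<Longrightarrow> (cols ! j = []) = (p \<le> j)"
    and len: "\<And>j. j < n \<Longrightarrow> length (cols ! j) \<le> ks ! j + 1"
    and srt: "\<And>j. j < n \<Longrightarrow> sorted_wrt (<) (cols ! j)"
    and hdm: "\<And>j1 j2. j1 < j2 \<Longrightarrow> j2 < p \<Longrightarrow> hd (cols ! j1) < hd (cols ! j2)"
    and dis: "\<And>j1 j2. j1 < n \<Longrightarrow> j2 < n \<Longrightarrow> j1 \<noteq> j2 \<Longrightarrow> set (cols ! j1) \<inter> set (cols ! j2) = {}"
    and st: "\<And>x. (\<exists>j<n. x \<in> set (cols ! j)) \<longleftrightarrow> 1 \<le> x \<and> x < i"
    and c0: "cols ! 0 \<noteq> []" and h0: "hd (cols ! 0) = 1"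
    and sm: "int (\<Sum>j<p. (ks ! j + 1 - length (cols ! j))) = sum_list (take (i - 1) D)"
    using A by auto
  have lD: "length D = bigN ks" using DF by simp
  have im1: "i - 1 < length D" using iN i2 lD by simp
  have tk: "take (Suc (i - 1)) D = take (i - 1) D @ [D ! (i - 1)]" using im1 by (simp add: take_Suc_conv_app_nth)
  have si: "Suc i - 1 = Suc (i - 1)" using i2 by simp
  have lt: "\<And>j x. j < n \<Longrightarrow> x \<in> set (cols ! j) \<Longrightarrow> x < i" using st by blast
  have n0: "0 < n" using npos n_def by simp
  show ?thesis
  proof (cases "0 < D ! (i - 1)")
    case True
    have pv: "D ! (i - 1) = int (ks ! p)" "p < n"
      using step_up_val[OF DF(2) im1 True] unfolding p_def n_def by auto
    have cp: "(LEAST j. j < length ks \<and> cols ! j = []) = p"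
    proof (rule Least_equality)
      show "p < length ks \<and> cols ! p = []" using pv emp n_def by auto
      show "\<And>y. y < length ks \<and> cols ! y = [] \<Longrightarrow> p \<le> y" using emp n_def by auto
    qed
    have fs: "fill_step ks cols (i, D ! (i - 1)) = cols[p := [i]]"
      using True cp unfolding fill_step_def by (auto simp: Let_def)
    define cols' where "cols' = cols[p := [i]]"
    have nth': "\<And>j. cols' ! j = (if j = p then [i] else cols ! j)" unfolding cols'_def using lc pv by auto
    have p': "length (filter (\<lambda>a. 0 < a) (take (Suc i - 1) D)) = Suc p"
      unfolding si tk p_def using True by simp
    have p0: "p \<noteq> 0" using emp[of 0] c0 n0 by auto
    show ?thesis unfolding fs cols'_def[symmetric] FI_def Let_def p' n_def[symmetric]
    proof (intro conjI allI impI)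
      show "length cols' = n" unfolding cols'_def using lc by simp
      show "\<And>j. j < n \<Longrightarrow> (cols' ! j = []) = (Suc p \<le> j)" using emp nth' by auto
      show "\<And>j. j < n \<Longrightarrow> length (cols' ! j) \<le> ks ! j + 1" using len nth' by auto
      show "\<And>j. j < n \<Longrightarrow> sorted_wrt (<) (cols' ! j)" using srt nth' by auto
      show "cols' ! 0 \<noteq> []" "hd (cols' ! 0) = 1" using nth' p0 c0 h0 by auto
    next
      fix j1 j2 :: nat assume a: "j1 < j2" "j2 < Suc p"
      show "hd (cols' ! j1) < hd (cols' ! j2)"
      proof (cases "j2 = p")
        case True
        have "cols ! j1 \<noteq> []" using emp[of j1] a True pv by auto
        then have "hd (cols ! j1) \<in> set (cols ! j1)" by simp
        then have "hd (cols ! j1) < i" using lt[of j1] a True pv by auto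
        then show ?thesis using nth' a True by auto
      next
        case False
        then show ?thesis using nth' a hdm by auto
      qed
    next
      fix j1 j2 assume a: "j1 < n" "j2 < n" "j1 \<noteq> j2"
      show "set (cols' ! j1) \<inter> set (cols' ! j2) = {}"
        using dis[OF a] lt[of j1] lt[of j2] a nth' emp[of p] pv by (cases "j1 = p"; cases "j2 = p") auto
    next
      fix x
      show "(\<exists>j<n. x \<in> set (cols' ! j)) = (1 \<le> x \<and> x < Suc i)"
      proof
        assume "\<exists>j<n. x \<in> set (cols' ! j)"
        then obtain j where "j < n" "x \<in> set (cols' ! j)" by blast
        then show "1 \<le> x \<and> x < Suc i" using st[of x] nth' i2 by (cases "j = p") auto
      next
        assume x: "1 \<le> x \<and> x < Suc i"
        show "\<exists>j<n. x \<in> set (cols' ! j)"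
        proof (cases "x = i")
          case True then show ?thesis using nth' pv by auto
        next
          case False
          then obtain j where "j < n" "x \<in> set (cols ! j)" using st[of x] x by auto
          moreover have "j \<noteq> p" using calculation emp[of p] pv by auto
          ultimately show ?thesis using nth' by auto
        qed
      qed
    next
      have "(\<Sum>j<Suc p. (ks ! j + 1 - length (cols' ! j))) = (\<Sum>j<p. (ks ! j + 1 - length (cols ! j))) + ks ! p"
        using nth' by simp
      then show "int (\<Sum>j<Suc p. (ks ! j + 1 - length (cols' ! j))) = sum_list (take (Suc i - 1) D)"
        unfolding si tk using sm pv by simp
    qed
  next
    case False
    have m1: "D ! (i - 1) = -1" using DF(3) im1 False by (meson nth_mem)
    have p': "length (filter (\<lambda>a. 0 < a) (take (Suc i - 1) D)) = p"
      unfolding si tk p_def using False by simp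
    have sum1: "sum_list (take (i - 1) D) \<ge> 1"
    proof (cases "Suc (i - 1) < length D")
      case True
      then show ?thesis using DF(4)[OF True] tk m1 by simp
    next
      case False
      then have "take (Suc (i - 1)) D = D" by simp
      then have "sum_list (take (i - 1) D @ [D ! (i - 1)]) = 0" using DF(5) tk by simp
      then show ?thesis using m1 by simp
    qed
    obtain j0 where j0: "j0 < p" "length (cols ! j0) < ks ! j0 + 1"
    proof (rule ccontr)
      assume "\<not> thesis"
      then have "\<forall>j<p. length (cols ! j) \<ge> ks ! j + 1" using that not_less by blast
      then have "(\<Sum>j<p. (ks ! j + 1 - length (cols ! j))) = 0" by simp
      then show False using sm sum1 by simp
    qed
    have pn: "p \<le> n"
    proof -
      have "filter (\<lambda>a. 0 < a) (take (i - 1) D) @ filter (\<lambda>a. 0 < a) (drop (i - 1) D) = map int ks"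
        using DF(2) filter_append[of _ "take (i - 1) D" "drop (i - 1) D", symmetric] by simp
      then have "length (filter (\<lambda>a. 0 < a) (take (i - 1) D) @ filter (\<lambda>a. 0 < a) (drop (i - 1) D)) = length (map int ks)"
        by (rule arg_cong)
      then show ?thesis unfolding p_def n_def by simp
    qed
    have actj0: "active ks cols j0" unfolding active_def using j0 pn emp[of j0] n_def by auto
    define S where "S = {last (cols ! j) | j. active ks cols j}"
    have S_eq: "S = (\<lambda>j. last (cols ! j)) ` {j. active ks cols j}" unfolding S_def by auto
    have finS: "finite S" unfolding S_eq by (rule finite_imageI) (rule finite_subset[of _ "{..<length ks}"], auto simp: active_def)
    have Sne: "S \<noteq> {}" unfolding S_eq using actj0 by auto
    define m where "m = Min S"
    have "m \<in> S" unfolding m_def using finS Sne by (rule Min_in)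
    then have exm: "\<exists>j. active ks cols j \<and> last (cols ! j) = m" unfolding S_def by auto
    define c where "c = (LEAST j. active ks cols j \<and> last (cols ! j) = m)"
    have actc: "active ks cols c" unfolding c_def using LeastI_ex[OF exm] by blast
    have fs: "fill_step ks cols (i, D ! (i - 1)) = cols[c := cols ! c @ [i]]"
      unfolding fill_step_def using m1 by (simp add: Let_def S_def[symmetric] m_def[symmetric] c_def[symmetric])
    have cn: "c < n" and cne: "cols ! c \<noteq> []" and clen: "length (cols ! c) < ks ! c + 1"
      using actc len[of c] unfolding active_def n_def by auto
    have cp: "c < p" using emp[OF cn] cne by simp
    define cols' where "cols' = cols[c := cols ! c @ [i]]"
    have nth': "\<And>j. cols' ! j = (if j = c then cols ! c @ [i] else cols ! j)" unfolding cols'_def using lc cn by auto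
    show ?thesis unfolding fs cols'_def[symmetric] FI_def Let_def p' n_def[symmetric]
    proof (intro conjI allI impI)
      show "length cols' = n" unfolding cols'_def using lc by simp
      show "\<And>j. j < n \<Longrightarrow> (cols' ! j = []) = (p \<le> j)" using emp nth' cn cne by auto
      show "\<And>j. j < n \<Longrightarrow> length (cols' ! j) \<le> ks ! j + 1" using len nth' clen by auto
      show "\<And>j. j < n \<Longrightarrow> sorted_wrt (<) (cols' ! j)"
        using srt nth' lt[of c] cn by (auto simp: sorted_wrt_append)
      show "cols' ! 0 \<noteq> []" "hd (cols' ! 0) = 1" using nth' c0 h0 cne by auto
    next
      fix j1 j2 :: nat assume a: "j1 < j2" "j2 < p"
      have "cols ! j1 \<noteq> []" "cols ! j2 \<noteq> []" using emp[of j1] emp[of j2] a pn by auto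
      then show "hd (cols' ! j1) < hd (cols' ! j2)" using nth' a hdm[OF a] by auto
    next
      fix j1 j2 assume a: "j1 < n" "j2 < n" "j1 \<noteq> j2"
      show "set (cols' ! j1) \<inter> set (cols' ! j2) = {}"
        using dis[OF a] lt[of j1] lt[of j2] a nth' by (cases "j1 = c"; cases "j2 = c") auto
    next
      fix x
      show "(\<exists>j<n. x \<in> set (cols' ! j)) = (1 \<le> x \<and> x < Suc i)"
      proof
        assume "\<exists>j<n. x \<in> set (cols' ! j)"
        then obtain j where "j < n" "x \<in> set (cols' ! j)" by blast
        then show "1 \<le> x \<and> x < Suc i" using st[of x] nth' i2 by (cases "j = c") auto
      next
        assume x: "1 \<le> x \<and> x < Suc i"
        show "\<exists>j<n. x \<in> set (cols' ! j)"
        proof (cases "x = i")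
          case True then show ?thesis using nth' cn by auto
        next
          case False
          then obtain j where "j < n" "x \<in> set (cols ! j)" using st[of x] x by auto
          then show ?thesis using nth' by (cases "j = c") auto
        qed
      qed
    next
      define f where "f = (\<lambda>j. ks ! j + 1 - length (cols ! j))"
      define f' where "f' = (\<lambda>j. ks ! j + 1 - length (cols' ! j))"
      have "(\<Sum>j<p. f j) = f c + (\<Sum>j\<in>{..<p} - {c}. f j)" using cp by (simp add: sum.remove)
      moreover have "(\<Sum>j<p. f' j) = f' c + (\<Sum>j\<in>{..<p} - {c}. f' j)" using cp by (simp add: sum.remove)
      moreover have "(\<Sum>j\<in>{..<p} - {c}. f' j) = (\<Sum>j\<in>{..<p} - {c}. f j)"
        by (rule sum.cong) (auto simp: f_def f'_def nth')
      moreover have "f c = f' c + 1" unfolding f_def f'_def using nth' clen by simp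
      ultimately have "int (\<Sum>j<p. f' j) = int (\<Sum>j<p. f j) - 1" by simp
      then show "int (\<Sum>j<p. (ks ! j + 1 - length (cols' ! j))) = sum_list (take (Suc i - 1) D)"
        unfolding si tk using sm m1 f_def f'_def by simp
    qed
  qed
qed


lemma FI_init:
  assumes dk: "in_Dk ks D" and npos: "0 < length ks" and kpos: "\<forall>k\<in>set ks. 0 < k"
  shows "FI ks D 2 ([1] # replicate (length ks - 1) [])"
proof -
  define n where "n = length ks"
  note DF = Dk_facts[OF dk]
  have k0: "0 < ks ! 0" using kpos npos by simp
  have "sum_list ks \<ge> ks ! 0" using npos by (cases ks) auto
  then have lD: "length D \<ge> 2" using DF(1) npos k0 unfolding bigN_def by linarith
  have t1: "take 1 D = [D ! 0]" using lD by (cases D) auto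
  have "sum_list (take 1 D) \<ge> 0" using DF(4)[of 1] lD by simp
  then have "D ! 0 \<ge> 0" using t1 by simp
  moreover have "0 < D ! 0 \<or> D ! 0 = -1" using DF(3) lD by (metis nth_mem less_le_trans zero_less_numeral)
  ultimately have d0: "0 < D ! 0" by auto
  have "0 < length D" using lD by linarith
  have dv: "D ! 0 = int (ks ! 0)" using step_up_val(1)[OF DF(2) \<open>0 < length D\<close> d0] by simp
  define cols where "cols = [1::nat] # replicate (n - 1) []"
  have nth': "\<And>j. j < n \<Longrightarrow> cols ! j = (if j = 0 then [1] else [])"
    unfolding cols_def n_def by (case_tac j) auto
  have lc: "length cols = n" unfolding cols_def n_def using npos by simp
  have p: "length (filter (\<lambda>a. 0 < a) (take 1 D)) = 1" using t1 d0 by simp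
  have two: "(2::nat) - 1 = 1" by simp
  show ?thesis unfolding cols_def[symmetric] FI_def Let_def two p n_def[symmetric]
  proof (intro conjI allI impI)
    show "length cols = n" by (rule lc)
    show "\<And>j. j < n \<Longrightarrow> (cols ! j = []) = (1 \<le> j)" using nth' by auto
    show "\<And>j. j < n \<Longrightarrow> length (cols ! j) \<le> ks ! j + 1" using nth' by auto
    show "\<And>j. j < n \<Longrightarrow> sorted_wrt (<) (cols ! j)" using nth' by auto
    show "\<And>j1 j2. j1 < j2 \<Longrightarrow> j2 < 1 \<Longrightarrow> hd (cols ! j1) < hd (cols ! j2)" by simp
    show "\<And>j1 j2. j1 < n \<Longrightarrow> j2 < n \<Longrightarrow> j1 \<noteq> j2 \<Longrightarrow> set (cols ! j1) \<inter> set (cols ! j2) = {}"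
      using nth' by auto
    show "cols ! 0 \<noteq> []" "hd (cols ! 0) = 1" using nth' npos n_def by auto
    show "int (\<Sum>j<1. ks ! j + 1 - length (cols ! j)) = sum_list (take 1 D)"
      using nth'[of 0] npos n_def t1 dv by simp
  next
    fix x
    show "(\<exists>j<n. x \<in> set (cols ! j)) = (1 \<le> x \<and> x < 2)"
    proof
      assume "\<exists>j<n. x \<in> set (cols ! j)"
      then obtain j where "j < n" "x \<in> set (cols ! j)" by blast
      then show "1 \<le> x \<and> x < 2" using nth' by (cases "j = 0") auto
    next
      assume "1 \<le> x \<and> x < 2"
      then have "x = 1" by simp
      then show "\<exists>j<n. x \<in> set (cols ! j)" using nth'[of 0] npos n_def by auto
    qed
  qed
qed

lemma FI_fold:
  assumes dk: "in_Dk ks D" and npos: "0 < length ks" and kpos: "\<forall>k\<in>set ks. 0 < k"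
  shows "m + 1 \<le> bigN ks \<Longrightarrow> FI ks D (m + 2) (foldl (fill_step ks) ([1] # replicate (length ks - 1) [])
             (map (\<lambda>i. (i, D ! (i - 1))) [2..<m + 2]))"
proof (induction m)
  case 0
  then show ?case using FI_init[OF assms] by (simp add: numeral_2_eq_2)
next
  case (Suc m)
  have e: "[2..<Suc m + 2] = [2..<m + 2] @ [m + 2]" by simp
  show ?case unfolding e foldl_append map_append
    using FI_step[OF Suc.IH dk _ _ npos] Suc.prems by simp
qed

lemma fillT_FI:
  assumes dk: "in_Dk ks D" and npos: "0 < length ks" and kpos: "\<forall>k\<in>set ks. 0 < k"
  shows "FI ks D (bigN ks + 1) (fillT ks D)"
proof -
  have lD: "length D = bigN ks" using Dk_facts(1)[OF dk] .
  have N1: "bigN ks \<ge> 1" using npos unfolding bigN_def by linarith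
  have z: "zip [2..<bigN ks + 1] (tl D) = map (\<lambda>i. (i, D ! (i - 1))) [2..<(bigN ks - 1) + 2]"
  proof (rule nth_equalityI)
    show "length (zip [2..<bigN ks + 1] (tl D)) = length (map (\<lambda>i. (i, D ! (i - 1))) [2..<(bigN ks - 1) + 2])"
      using lD N1 by simp
  next
    fix k assume "k < length (zip [2..<bigN ks + 1] (tl D))"
    then have k: "k < bigN ks - 1" using lD by simp
    then show "zip [2..<bigN ks + 1] (tl D) ! k = map (\<lambda>i. (i, D ! (i - 1))) [2..<(bigN ks - 1) + 2] ! k"
      using lD N1 by (simp add: nth_tl del: upt_Suc)
  qed
  show ?thesis unfolding fillT_def z using FI_fold[OF assms, of "bigN ks - 1"] N1
    by (simp add: Suc_diff_le)
qed



definition INV :: "nat list \<Rightarrow> nat list list \<Rightarrow> nat \<Rightarrow> nat set \<Rightarrow> nat \<Rightarrow> bool" where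
  "INV ks T s M cur \<longleftrightarrow> M \<subseteq> boxes T \<and> s \<in> M \<and>
    (\<forall>\<rho>. card {x\<in>M. target_rank ks T x = \<rho>} + (if \<rho> = 0 then 1 else 0)
        = card {x\<in>M. rank T x = \<rho>} + (if target_rank ks T cur = \<rho> then 1 else 0)) \<and>
    (\<forall>x\<in>M. x \<noteq> s \<longrightarrow> (\<forall>y\<in>boxes T. rank T y = rank T x \<longrightarrow> x < y \<longrightarrow> y \<in> M))"

locale WL =
  fixes ks :: "nat list" and T :: "nat list list" and s :: nat
  assumes fin: "finite (boxes T)"
  and bal: "\<And>\<rho>. card {x\<in>boxes T. rank T x = \<rho>} = card {x\<in>boxes T. target_rank ks T x = \<rho>}"
  and minc: "\<And>x. x\<in>boxes T \<Longrightarrow> rank T x \<noteq> 0 \<Longrightarrow> (\<forall>y\<in>boxes T. rank T y = rank T x \<longrightarrow> x \<le> y)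
        \<Longrightarrow> target_rank ks T x = rank T x - 1"
  and sB: "s \<in> boxes T" and s0: "rank T s = 0"
begin

abbreviation "B \<equiv> boxes T"
abbreviation "rk \<equiv> rank T"
abbreviation "tg \<equiv> target_rank ks T"

lemma sub_card_eq:
  assumes "finite A" "X \<subseteq> A" "card A \<le> card X" shows "X = A"
  using assms by (meson card_seteq)

lemma nonempty:
  assumes I: "INV ks T s M cur" and ne: "B - M \<noteq> {}"
  shows "{x\<in>B. x \<notin> M \<and> rk x = tg cur} \<noteq> {}"
proof
  assume C: "{x\<in>B. x \<notin> M \<and> rk x = tg cur} = {}"
  have MB: "M \<subseteq> B" and sM: "s \<in> M" using I by (auto simp: INV_def)
  have cnt: "\<And>\<rho>. card {x\<in>M. tg x = \<rho>} + (if \<rho> = 0 then 1 else 0)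
        = card {x\<in>M. rk x = \<rho>} + (if tg cur = \<rho> then 1 else 0)" using I by (simp add: INV_def)
  have up: "\<And>x y. x\<in>M \<Longrightarrow> x \<noteq> s \<Longrightarrow> y\<in>B \<Longrightarrow> rk y = rk x \<Longrightarrow> x < y \<Longrightarrow> y \<in> M"
    using I unfolding INV_def by blast
  have finM: "finite M" using MB fin finite_subset by blast
  have outeq: "\<And>\<rho>. (\<forall>x\<in>B. rk x = \<rho> \<longrightarrow> x \<in> M) \<Longrightarrow> card {x\<in>M. rk x = \<rho>} = card {x\<in>B. rk x = \<rho>}"
    by (rule arg_cong[where f=card]) (use MB in auto)
  have inle: "\<And>\<rho>. card {x\<in>M. tg x = \<rho>} \<le> card {x\<in>B. tg x = \<rho>}"
    by (rule card_mono) (use fin MB in auto)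
  have inall: "\<And>\<rho>. card {x\<in>B. tg x = \<rho>} \<le> card {x\<in>M. tg x = \<rho>} \<Longrightarrow> \<forall>x\<in>B. tg x = \<rho> \<longrightarrow> x \<in> M"
  proof -
    fix \<rho> assume "card {x\<in>B. tg x = \<rho>} \<le> card {x\<in>M. tg x = \<rho>}"
    then have "{x\<in>M. tg x = \<rho>} = {x\<in>B. tg x = \<rho>}"
      by (intro sub_card_eq) (use fin MB in auto)
    then show "\<forall>x\<in>B. tg x = \<rho> \<longrightarrow> x \<in> M" by blast
  qed
  define v where "v = tg cur"
  have allv: "\<forall>x\<in>B. rk x = v \<longrightarrow> x \<in> M" using C v_def by blast
  have v0: "v = 0"
  proof (rule ccontr)
    assume "v \<noteq> 0"
    have "card {x\<in>M. tg x = v} = card {x\<in>M. rk x = v} + 1" using cnt[of v] \<open>v \<noteq> 0\<close> v_def by simp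
    moreover have "card {x\<in>M. rk x = v} = card {x\<in>B. tg x = v}" using outeq[OF allv] bal by simp
    ultimately show False using inle[of v] by simp
  qed
  have bal': "\<And>\<rho>. card {x\<in>M. tg x = \<rho>} = card {x\<in>M. rk x = \<rho>}" proof -
    fix \<rho> show "card {x\<in>M. tg x = \<rho>} = card {x\<in>M. rk x = \<rho>}" using cnt[of \<rho>] v0 v_def by (cases "\<rho> = 0") auto
  qed
  obtain u where u: "u \<in> B - M" using ne by blast
  define \<rho> where "\<rho> = Min (rk ` (B - M))"
  have finBM: "finite (B - M)" using fin by blast
  have \<rho>in: "\<rho> \<in> rk ` (B - M)" unfolding \<rho>_def using finBM u by (intro Min_in) auto
  have \<rho>min: "\<And>x. x \<in> B - M \<Longrightarrow> \<rho> \<le> rk x" unfolding \<rho>_def using finBM by auto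
  have \<rho>ne: "\<rho> \<noteq> 0"
  proof
    assume "\<rho> = 0"
    then obtain z where "z \<in> B - M" "rk z = 0" using \<rho>in by auto
    then show False using allv v0 by blast
  qed
  define m where "m = Min {x\<in>B. rk x = \<rho>}"
  have finR: "finite {x\<in>B. rk x = \<rho>}" using fin by auto
  obtain w where w: "w \<in> B - M" "rk w = \<rho>" using \<rho>in by auto
  have mB: "m \<in> {x\<in>B. rk x = \<rho>}" unfolding m_def using finR w by (intro Min_in) auto
  have mle: "\<And>y. y \<in> B \<Longrightarrow> rk y = \<rho> \<Longrightarrow> m \<le> y" unfolding m_def using finR by auto
  have mM: "m \<notin> M"
  proof
    assume "m \<in> M"
    have "m \<noteq> s" using mB s0 \<rho>ne by auto
    have "w \<in> M"
    proof (cases "w = m")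
      case True then show ?thesis using \<open>m \<in> M\<close> by simp
    next
      case False
      then have "m < w" using mle[of w] w by auto
      then show ?thesis using up[OF \<open>m \<in> M\<close> \<open>m \<noteq> s\<close>, of w] w mB by auto
    qed
    then show False using w by auto
  qed
  have tgm: "tg m = \<rho> - 1" using minc[of m] mB mle \<rho>ne by force
  have allp: "\<forall>x\<in>B. rk x = \<rho> - 1 \<longrightarrow> x \<in> M"
  proof (intro ballI impI)
    fix x assume "x \<in> B" "rk x = \<rho> - 1"
    show "x \<in> M"
    proof (rule ccontr)
      assume "x \<notin> M"
      then have "\<rho> \<le> rk x" using \<rho>min \<open>x \<in> B\<close> by blast
      then show False using \<open>rk x = \<rho> - 1\<close> \<rho>ne by simp
    qed
  qed
  have "card {x\<in>B. tg x = \<rho> - 1} \<le> card {x\<in>M. tg x = \<rho> - 1}"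
    using outeq[OF allp] bal bal' by simp
  then have "m \<in> M" using inall mB tgm by blast
  then show False using mM by simp
qed

lemma walk_len:
  "INV ks T s M cur \<Longrightarrow> card (B - M) \<le> f \<Longrightarrow> length (walk ks T f cur M) = card (B - M)"
proof (induction f arbitrary: M cur)
  case 0
  then show ?case by simp
next
  case (Suc f)
  have MB: "M \<subseteq> B" and sM: "s \<in> M" using Suc.prems by (auto simp: INV_def)
  define C where "C = {x\<in>B. x \<notin> M \<and> rk x = tg cur}"
  show ?case
  proof (cases "B - M = {}")
    case True
    then have "C = {}" unfolding C_def by auto
    moreover have "card (B - M) = 0" using True by (simp only: card.empty)
    ultimately show ?thesis by (simp add: C_def[symmetric] Let_def)
  next
    case False
    have Cne: "C \<noteq> {}" unfolding C_def using nonempty[OF Suc.prems(1) False] .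
    have finC: "finite C" unfolding C_def using fin by auto
    define x where "x = Max C"
    have xC: "x \<in> C" unfolding x_def using finC Cne by simp
    have xmax: "\<And>y. y \<in> C \<Longrightarrow> y \<le> x" unfolding x_def using finC by simp
    have I': "INV ks T s (insert x M) x"
    proof -
      have xB: "x \<in> B" "x \<notin> M" "rk x = tg cur" using xC C_def by auto
      have finM: "finite M" using MB fin finite_subset by blast
      have c1: "\<And>P. card {y\<in>insert x M. P y} = card {y\<in>M. P y} + (if P x then 1 else 0)"
      proof -
        fix P :: "nat \<Rightarrow> bool"
        show "card {y\<in>insert x M. P y} = card {y\<in>M. P y} + (if P x then 1 else 0)"
        proof (cases "P x")
          case True
          then have "{y\<in>insert x M. P y} = insert x {y\<in>M. P y}" by auto
          then show ?thesis using True finM xB by simp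
        next
          case False
          then have "{y\<in>insert x M. P y} = {y\<in>M. P y}" by auto
          then show ?thesis using False by simp
        qed
      qed
      have cnt: "\<And>\<rho>. card {y\<in>M. tg y = \<rho>} + (if \<rho> = 0 then 1 else 0)
        = card {y\<in>M. rk y = \<rho>} + (if tg cur = \<rho> then 1 else 0)" using Suc.prems(1) by (simp add: INV_def)
      have up: "\<And>z y. z\<in>M \<Longrightarrow> z \<noteq> s \<Longrightarrow> y\<in>B \<Longrightarrow> rk y = rk z \<Longrightarrow> z < y \<Longrightarrow> y \<in> M"
        using Suc.prems(1) unfolding INV_def by blast
      show ?thesis unfolding INV_def
      proof (intro conjI allI ballI impI)
        show "insert x M \<subseteq> B" using MB xB by auto
        show "s \<in> insert x M" using sM by auto
      next
        fix \<rho>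
        show "card {y\<in>insert x M. tg y = \<rho>} + (if \<rho> = 0 then 1 else 0)
          = card {y\<in>insert x M. rk y = \<rho>} + (if tg x = \<rho> then 1 else 0)"
          using c1[of "\<lambda>y. tg y = \<rho>"] c1[of "\<lambda>y. rk y = \<rho>"] cnt[of \<rho>] xB(3) by auto
      next
        fix z y assume z: "z \<in> insert x M" "z \<noteq> s" and y: "y \<in> B" "rk y = rk z" "z < y"
        show "y \<in> insert x M"
        proof (cases "z = x")
          case True
          show ?thesis
          proof (rule ccontr)
            assume "y \<notin> insert x M"
            then have "y \<in> C" using y True xB unfolding C_def by auto
            then show False using xmax y True by force
          qed
        next
          case False
          then show ?thesis using up[of z y] z y by auto
        qed
      qed
    qed
    have cd: "card (B - insert x M) = card (B - M) - 1"
    proof -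
      have "x \<in> B - M" using xC C_def by auto
      moreover have "B - insert x M = (B - M) - {x}" by auto
      ultimately show ?thesis using fin by (simp add: card_Diff_singleton)
    qed
    have "card (B - M) > 0" using False fin by auto
    then have "card (B - insert x M) \<le> f" using cd Suc.prems(2) by simp
    then have L: "length (walk ks T f x (insert x M)) = card (B - insert x M)" using Suc.IH[OF I'] by simp
    have "walk ks T (Suc f) cur M = x # walk ks T f x (insert x M)"
      using Cne by (simp add: Let_def C_def[symmetric] x_def)
    then show ?thesis using L cd \<open>card (B - M) > 0\<close> by simp
  qed
qed

end


lemma T_props:
  assumes dk: "in_Dk ks D" and npos: "0 < length ks" and kpos: "\<forall>k\<in>set ks. 0 < k"
  defines "T \<equiv> fillT ks D"
  shows "length T = length ks"
    "\<And>j. j < length ks \<Longrightarrow> length (T ! j) = ks ! j + 1"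
    "\<And>j. j < length ks \<Longrightarrow> sorted_wrt (<) (T ! j)"
    "\<And>j1 j2. j1 < j2 \<Longrightarrow> j2 < length ks \<Longrightarrow> hd (T ! j1) < hd (T ! j2)"
    "\<And>j1 j2. j1 < length ks \<Longrightarrow> j2 < length ks \<Longrightarrow> j1 \<noteq> j2 \<Longrightarrow> set (T ! j1) \<inter> set (T ! j2) = {}"
    "\<And>x. (\<exists>j<length ks. x \<in> set (T ! j)) \<longleftrightarrow> 1 \<le> x \<and> x < bigN ks + 1"
    "hd (T ! 0) = 1"
proof -
  define n where "n = length ks"
  define p where "p = length (filter (\<lambda>a. 0 < a) (take (bigN ks + 1 - 1) D))"
  note DF = Dk_facts[OF dk]
  have A: "length T = n \<and>
     (\<forall>j<n. (T ! j = []) = (p \<le> j)) \<and>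
     (\<forall>j<n. length (T ! j) \<le> ks ! j + 1) \<and>
     (\<forall>j<n. sorted_wrt (<) (T ! j)) \<and>
     (\<forall>j1 j2. j1 < j2 \<longrightarrow> j2 < p \<longrightarrow> hd (T ! j1) < hd (T ! j2)) \<and>
     (\<forall>j1<n. \<forall>j2<n. j1 \<noteq> j2 \<longrightarrow> set (T ! j1) \<inter> set (T ! j2) = {}) \<and>
     (\<forall>x. (\<exists>j<n. x \<in> set (T ! j)) \<longleftrightarrow> 1 \<le> x \<and> x < bigN ks + 1) \<and>
     T ! 0 \<noteq> [] \<and> hd (T ! 0) = 1 \<and>
     int (\<Sum>j<p. (ks ! j + 1 - length (T ! j))) = sum_list (take (bigN ks + 1 - 1) D)"
    using fillT_FI[OF assms(1-3)] unfolding T_def FI_def Let_def n_def p_def .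
  have pn: "p = n" unfolding p_def n_def using DF(1,2) by simp
  have sm0: "int (\<Sum>j<p. (ks ! j + 1 - length (T ! j))) = sum_list (take (bigN ks + 1 - 1) D)" using A by blast
  have "take (bigN ks + 1 - 1) D = D" using DF(1) by simp
  then have sm: "int (\<Sum>j<n. (ks ! j + 1 - length (T ! j))) = 0" using sm0 pn DF(5) by (simp only:)
  then have "(\<Sum>j<n. (ks ! j + 1 - length (T ! j))) = 0" by linarith
  then have z: "\<And>j. j < n \<Longrightarrow> ks ! j + 1 - length (T ! j) = 0" by simp
  show "length T = length ks" using A n_def by simp
  have lenle: "\<forall>j<n. length (T ! j) \<le> ks ! j + 1" using A by blast
  show "\<And>j. j < length ks \<Longrightarrow> length (T ! j) = ks ! j + 1"
  proof -
    fix j assume "j < length ks"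
    then have "length (T ! j) \<le> ks ! j + 1" "ks ! j + 1 - length (T ! j) = 0" using lenle z n_def by auto
    then show "length (T ! j) = ks ! j + 1" by simp
  qed
  show "\<And>j. j < length ks \<Longrightarrow> sorted_wrt (<) (T ! j)" using A n_def by simp
  show "\<And>j1 j2. j1 < j2 \<Longrightarrow> j2 < length ks \<Longrightarrow> hd (T ! j1) < hd (T ! j2)" using A n_def pn by simp
  show "\<And>j1 j2. j1 < length ks \<Longrightarrow> j2 < length ks \<Longrightarrow> j1 \<noteq> j2 \<Longrightarrow> set (T ! j1) \<inter> set (T ! j2) = {}"
    using A n_def by simp
  show "\<And>x. (\<exists>j<length ks. x \<in> set (T ! j)) \<longleftrightarrow> 1 \<le> x \<and> x < bigN ks + 1" using A n_def by simp
  show "hd (T ! 0) = 1" using A by simp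
qed


locale TS =
  fixes ks :: "nat list" and T :: "nat list list" and N :: nat
  assumes npos: "0 < length ks"
  and lT: "length T = length ks"
  and lenT: "\<And>j. j < length ks \<Longrightarrow> length (T ! j) = ks ! j + 1"
  and srt: "\<And>j. j < length ks \<Longrightarrow> sorted_wrt (<) (T ! j)"
  and hdm: "\<And>j1 j2. j1 < j2 \<Longrightarrow> j2 < length ks \<Longrightarrow> hd (T ! j1) < hd (T ! j2)"
  and dis: "\<And>j1 j2. j1 < length ks \<Longrightarrow> j2 < length ks \<Longrightarrow> j1 \<noteq> j2 \<Longrightarrow> set (T ! j1) \<inter> set (T ! j2) = {}"
  and st: "\<And>x. (\<exists>j<length ks. x \<in> set (T ! j)) \<longleftrightarrow> 1 \<le> x \<and> x < N + 1"
  and h0: "hd (T ! 0) = 1"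
begin

abbreviation "n \<equiv> length ks"

lemma boxes_iff: "x \<in> boxes T \<longleftrightarrow> (\<exists>c<n. x \<in> set (T ! c))"
  unfolding boxes_def using lT by (force simp: set_conv_nth)

lemma boxes_eq: "boxes T = {1..<N+1}"
  using st boxes_iff by auto

lemma pos: "x \<in> boxes T \<Longrightarrow> \<exists>c r. c < n \<and> r < length (T ! c) \<and> T ! c ! r = x"
  unfolding boxes_iff by (auto simp: in_set_conv_nth)

lemma box_in: "c < n \<Longrightarrow> r < length (T ! c) \<Longrightarrow> T ! c ! r \<in> boxes T"
  unfolding boxes_iff by auto

lemma colrow:
  assumes c: "c < n" and r: "r < length (T ! c)"
  shows "col_of T (T ! c ! r) = c" "row_of T (T ! c ! r) = r + 1"
proof -
  have xin: "T ! c ! r \<in> set (T ! c)" using r by simp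
  show cc: "col_of T (T ! c ! r) = c" unfolding col_of_def
  proof (rule the_equality)
    show "c < length T \<and> T ! c ! r \<in> set (T ! c)" using c lT xin by simp
    fix j assume a: "j < length T \<and> T ! c ! r \<in> set (T ! j)"
    show "j = c"
    proof (rule ccontr)
      assume "j \<noteq> c"
      then have "set (T ! j) \<inter> set (T ! c) = {}" using dis[of j c] a c lT by simp
      then show False using a xin by blast
    qed
  qed
  have dst: "distinct (T ! c)" using srt[OF c] by (simp add: strict_sorted_iff)
  show "row_of T (T ! c ! r) = r + 1" unfolding row_of_def cc
  proof -
    have "(THE r'. r' < length (T ! c) \<and> T ! c ! r' = T ! c ! r) = r"
    proof (rule the_equality)
      show "r < length (T ! c) \<and> T ! c ! r = T ! c ! r" using r by simp
      fix r' assume "r' < length (T ! c) \<and> T ! c ! r' = T ! c ! r"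
      then show "r' = r" using dst r nth_eq_iff_index_eq by blast
    qed
    then show "(THE r'. r' < length (T ! c) \<and> T ! c ! r' = T ! c ! r) + 1 = r + 1" by simp
  qed
qed

lemma len_base: "length (base_list T j) = j"
  by (induction j) (auto simp: Let_def)

lemma base_nth: "j < m \<Longrightarrow> base_list T m ! j = base_list T (Suc j) ! j"
proof (induction m)
  case 0 then show ?case by simp
next
  case (Suc m)
  show ?case
  proof (cases "j = m")
    case True then show ?thesis by simp
  next
    case False
    then have "j < m" using Suc.prems by simp
    then have "base_list T (Suc m) ! j = base_list T m ! j"
      by (simp add: Let_def nth_append len_base)
    then show ?thesis using Suc.IH \<open>j < m\<close> by simp
  qed
qed

definition b :: "nat \<Rightarrow> nat" where "b j = base_list T n ! j"

lemma rank_eq: "c < n \<Longrightarrow> r < length (T ! c) \<Longrightarrow> rank T (T ! c ! r) = b c + r"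
  unfolding rank_def b_def using colrow lT by simp

lemma b0: "b 0 = 0"
  unfolding b_def using base_nth[of 0 n] npos by simp

lemma hd_nth: "c < n \<Longrightarrow> hd (T ! c) = T ! c ! 0"
  using lenT[of c] by (cases "T ! c") auto

lemma hd_le: assumes c: "c < n" and r: "r < length (T ! c)" shows "hd (T ! c) \<le> T ! c ! r"
proof (cases r)
  case 0 then show ?thesis using hd_nth[OF c] by simp
next
  case (Suc r')
  have "T ! c ! 0 < T ! c ! r" using srt[OF c] r Suc by (simp add: sorted_wrt_iff_nth_less)
  then show ?thesis using hd_nth[OF c] by simp
qed

lemma top_pred:
  assumes j: "0 < j" "j < n"
  shows "\<exists>c r. c < j \<and> r < length (T ! c) \<and> T ! c ! r = hd (T ! j) - 1 \<and> b j = b c + r"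
proof -
  define A where "A = hd (T ! j) - 1"
  have h1: "hd (T ! j) > 1" using hdm[of 0 j] j h0 by simp
  have "hd (T ! j) \<in> boxes T" using hd_nth[of j] box_in[of j 0] j lenT[of j] by simp
  then have "A \<in> boxes T" unfolding A_def boxes_eq using h1 by auto
  then obtain c r where cr: "c < n" "r < length (T ! c)" "T ! c ! r = A" using pos by blast
  have cj: "c < j"
  proof (rule ccontr)
    assume "\<not> c < j"
    then have "j = c \<or> j < c" by auto
    then show False
    proof
      assume "j = c" then show False using hd_le[OF cr(1,2)] cr(3) A_def h1 by simp
    next
      assume "j < c" then show False using hdm[of j c] cr hd_le[OF cr(1,2)] A_def h1 by simp
    qed
  qed
  have "b j = base_list T (Suc j) ! j" unfolding b_def using base_nth[of j n] j by simp
  also have "\<dots> = base_list T j ! c + (row_of T A - 1)"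
  proof -
    have e: "base_list T (Suc j) = base_list T j @ [base_list T j ! col_of T A + (row_of T A - 1)]"
      using j unfolding A_def by (simp add: Let_def)
    show ?thesis unfolding e using colrow[OF cr(1,2)] cr(3) by (simp add: nth_append len_base)
  qed
  also have "\<dots> = b c + r"
    using base_nth[of c j] base_nth[of c n] cj j cr colrow[OF cr(1,2)] unfolding b_def by simp
  finally show ?thesis using cr cj A_def by blast
qed

lemma tg_eq:
  assumes c: "c < n" and r: "r < length (T ! c)"
  shows "target_rank ks T (T ! c ! r) = (if r = 0 then b c + ks ! c else b c + r - 1)"
  unfolding target_rank_def Let_def using colrow[OF c r] rank_eq[OF c] lenT[OF c] r by auto

end



lemma cnt1: "card {r. r < Suc k \<and> bb + r = \<rho>} = (if bb \<le> \<rho> \<and> \<rho> \<le> bb + k then 1 else 0)"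
proof (cases "bb \<le> \<rho> \<and> \<rho> \<le> bb + k")
  case True
  then have "{r. r < Suc k \<and> bb + r = \<rho>} = {\<rho> - bb}" by auto
  then show ?thesis using True by simp
next
  case False
  have e: "{r. r < Suc k \<and> bb + r = \<rho>} = {}" using False by auto
  show ?thesis unfolding e if_not_P[OF False] by simp
qed

lemma cnt2: "card {r. r < Suc k \<and> (if r = 0 then bb + k else bb + r - 1) = \<rho>} = (if bb \<le> \<rho> \<and> \<rho> \<le> bb + k then 1 else 0)"
proof (cases "bb \<le> \<rho> \<and> \<rho> \<le> bb + k")
  case True
  show ?thesis
  proof (cases "\<rho> = bb + k")
    case True
    then have "{r. r < Suc k \<and> (if r = 0 then bb + k else bb + r - 1) = \<rho>} = {0}" by auto
    then show ?thesis using True by simp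
  next
    case False
    then have "{r. r < Suc k \<and> (if r = 0 then bb + k else bb + r - 1) = \<rho>} = {\<rho> - bb + 1}" using \<open>bb \<le> \<rho> \<and> \<rho> \<le> bb + k\<close> by auto
    then show ?thesis using \<open>bb \<le> \<rho> \<and> \<rho> \<le> bb + k\<close> by simp
  qed
next
  case False
  have e: "{r. r < Suc k \<and> (if r = 0 then bb + k else bb + r - 1) = \<rho>} = {}" using False by auto
  show ?thesis unfolding e if_not_P[OF False] by simp
qed

context TS begin

lemma finB: "finite (boxes T)" using boxes_eq by simp

lemma card_col: "card {x \<in> boxes T. P x} = (\<Sum>c<n. card {r. r < length (T ! c) \<and> P (T ! c ! r)})"
proof -
  have e: "{x \<in> boxes T. P x} = (\<Union>c\<in>{..<n}. (\<lambda>r. T ! c ! r) ` {r. r < length (T ! c) \<and> P (T ! c ! r)})"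
    using pos box_in by fastforce
  have "card {x \<in> boxes T. P x} = (\<Sum>c<n. card ((\<lambda>r. T ! c ! r) ` {r. r < length (T ! c) \<and> P (T ! c ! r)}))"
    unfolding e
  proof (rule card_UN_disjoint)
    show "finite {..<n}" by simp
    show "\<forall>c\<in>{..<n}. finite ((\<lambda>r. T ! c ! r) ` {r. r < length (T ! c) \<and> P (T ! c ! r)})" by simp
    show "\<forall>c\<in>{..<n}. \<forall>j\<in>{..<n}. c \<noteq> j \<longrightarrow>
      (\<lambda>r. T ! c ! r) ` {r. r < length (T ! c) \<and> P (T ! c ! r)} \<inter> (\<lambda>r. T ! j ! r) ` {r. r < length (T ! j) \<and> P (T ! j ! r)} = {}"
    proof (intro ballI impI)
      fix c j assume "c \<in> {..<n}" "j \<in> {..<n}" "c \<noteq> j"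
      then have d: "set (T ! c) \<inter> set (T ! j) = {}" using dis by simp
      show "(\<lambda>r. T ! c ! r) ` {r. r < length (T ! c) \<and> P (T ! c ! r)} \<inter> (\<lambda>r. T ! j ! r) ` {r. r < length (T ! j) \<and> P (T ! j ! r)} = {}"
      proof (rule ccontr)
        assume "\<not> ?thesis"
        then obtain r1 r2 where "r1 < length (T ! c)" "r2 < length (T ! j)" "T ! c ! r1 = T ! j ! r2" by blast
        then have "T ! c ! r1 \<in> set (T ! c) \<inter> set (T ! j)" by (metis IntI nth_mem)
        then show False using d by blast
      qed
    qed
  qed
  also have "\<dots> = (\<Sum>c<n. card {r. r < length (T ! c) \<and> P (T ! c ! r)})"
  proof (rule sum.cong)
    fix c assume c: "c \<in> {..<n}"
    have dst: "distinct (T ! c)" using srt[of c] c by (simp add: strict_sorted_iff)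
    have "inj_on (\<lambda>r. T ! c ! r) {r. r < length (T ! c) \<and> P (T ! c ! r)}"
      unfolding inj_on_def using dst nth_eq_iff_index_eq by blast
    then show "card ((\<lambda>r. T ! c ! r) ` {r. r < length (T ! c) \<and> P (T ! c ! r)}) = card {r. r < length (T ! c) \<and> P (T ! c ! r)}"
      by (rule card_image)
  qed simp
  finally show ?thesis .
qed

lemma bal: "card {x \<in> boxes T. rank T x = \<rho>} = card {x \<in> boxes T. target_rank ks T x = \<rho>}"
  unfolding card_col
proof (rule sum.cong)
  fix c assume c: "c \<in> {..<n}"
  then have c': "c < n" by simp
  have "{r. r < length (T ! c) \<and> rank T (T ! c ! r) = \<rho>} = {r. r < Suc (ks ! c) \<and> b c + r = \<rho>}"
    using rank_eq[OF c'] lenT[OF c'] by auto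
  moreover have "{r. r < length (T ! c) \<and> target_rank ks T (T ! c ! r) = \<rho>}
     = {r. r < Suc (ks ! c) \<and> (if r = 0 then b c + ks ! c else b c + r - 1) = \<rho>}"
    using tg_eq[OF c'] lenT[OF c'] by auto
  ultimately show "card {r. r < length (T ! c) \<and> rank T (T ! c ! r) = \<rho>} =
         card {r. r < length (T ! c) \<and> target_rank ks T (T ! c ! r) = \<rho>}"
    using cnt1 cnt2 by simp
qed simp

lemma rank1: "rank T 1 = 0"
proof -
  have "T ! 0 ! 0 = 1" using hd_nth[of 0] npos h0 by simp
  then show ?thesis using rank_eq[of 0 0] npos lenT[of 0] b0 by simp
qed

lemma minc: "x \<in> boxes T \<Longrightarrow> rank T x \<noteq> 0 \<Longrightarrow> (\<forall>y\<in>boxes T. rank T y = rank T x \<longrightarrow> x \<le> y)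
        \<Longrightarrow> target_rank ks T x = rank T x - 1"
proof -
  assume xB: "x \<in> boxes T" and r0: "rank T x \<noteq> 0" and mn: "\<forall>y\<in>boxes T. rank T y = rank T x \<longrightarrow> x \<le> y"
  obtain c r where cr: "c < n" "r < length (T ! c)" "T ! c ! r = x" using pos[OF xB] by blast
  show ?thesis
  proof (cases r)
    case (Suc r')
    then show ?thesis using tg_eq[OF cr(1,2)] rank_eq[OF cr(1,2)] cr(3) by simp
  next
    case 0
    show ?thesis
    proof (cases c)
      case 0
      then show ?thesis using r0 rank_eq[OF cr(1,2)] cr(3) \<open>r = 0\<close> b0 by simp
    next
      case (Suc c')
      then obtain c2 r2 where q: "c2 < c" "r2 < length (T ! c2)" "T ! c2 ! r2 = hd (T ! c) - 1" "b c = b c2 + r2"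
        using top_pred[of c] cr(1) by auto
      have hx: "hd (T ! c) = x" using hd_nth[OF cr(1)] cr(3) 0 by simp
      have c2n: "c2 < n" using q(1) cr(1) by simp
      have "rank T (T ! c2 ! r2) = rank T x" using rank_eq[OF c2n q(2)] rank_eq[OF cr(1,2)] q(4) cr(3) 0 by simp
      moreover have "T ! c2 ! r2 \<in> boxes T" using box_in[OF c2n q(2)] .
      ultimately have "x \<le> T ! c2 ! r2" using mn by simp
      moreover have "x \<ge> 1" using xB boxes_eq by simp
      ultimately show ?thesis using q(3) hx by simp
    qed
  qed
qed

end


theorem mainTheorem7:
  fixes ks :: "nat list" and D :: "int list"
  assumes "length ks \<ge> 1"
    and "\<forall>k\<in>set ks. k > 0"
    and "in_Dk ks D"
  shows "length (sigma ks D) = length ks + sum_list ks"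
proof -
  define T where "T = fillT ks D"
  have npos: "0 < length ks" using assms(1) by linarith
  note TP = T_props[OF assms(3) npos assms(2), folded T_def]
  interpret TS ks T "bigN ks"
    by (unfold_locales) (use TP npos in auto)
  define s where "s = Max {x \<in> boxes T. rank T x = 0}"
  have N1: "bigN ks \<ge> 1" using npos unfolding bigN_def by linarith
  have oneB: "1 \<in> boxes T" using boxes_eq N1 by simp
  have finS: "finite {x \<in> boxes T. rank T x = 0}" using finB by simp
  have "s \<in> {x \<in> boxes T. rank T x = 0}" unfolding s_def
    using finS oneB rank1 by (intro Max_in) auto
  then have sB: "s \<in> boxes T" and s0: "rank T s = 0" by auto
  interpret WL ks T s
    by (unfold_locales) (use finB bal minc sB s0 in auto)
  have c1: "\<And>P. card {x\<in>{s}. P x} = (if P s then 1 else 0)"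
  proof -
    fix P :: "nat \<Rightarrow> bool"
    show "card {x\<in>{s}. P x} = (if P s then 1 else 0)"
    proof (cases "P s")
      case True then have "{x\<in>{s}. P x} = {s}" by auto
      then show ?thesis using True by simp
    next
      case False then have "{x\<in>{s}. P x} = {}" by auto
      then show ?thesis using False by simp
    qed
  qed
  have I: "INV ks T s {s} s" unfolding INV_def c1 using sB s0 by auto
  have cd: "card (boxes T - {s}) = bigN ks - 1" using sB finB boxes_eq by (simp add: card_Diff_singleton)
  have L: "length (walk ks T (bigN ks) s {s}) = bigN ks - 1"
    using walk_len[OF I] cd by simp
  have "sigma ks D = s # walk ks T (bigN ks) s {s}"
    unfolding sigma_def Let_def T_def[symmetric] s_def ..
  then show ?thesis using L N1 unfolding bigN_def by simp
qed


end
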